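(* Let $A$ be a unital JB$^*$-algebra, $T:A\to A$ a bounded linear map which is triple derivable at orthogonal pairs, and $e$ a tripotent in $A$. Let $T_e=P_2(e)T|_{A_2(e)}:A_2(e)\to A_2(e)$. Suppose $\delta:A\to A$ is a triple derivation and $\xi$ is a self-adjoint element of the centre of $A$ with $T(a)=\delta(a)+\xi\circ a$ for all $a\in A$, and suppose $\delta_e:A_2(e)\to A_2(e)$ is a triple derivation and $\xi_e$ is a self-adjoint element of the centre of the JB$^*$-algebra $A_2(e)$ (self-adjoint meaning $\xi_e^{*_e}=\xi_e$) with $T_e(a)=\delta_e(a)+\xi_e\circ_e a$ for all $a\in A_2(e)$. Then $\xi\circ e=\xi_e$.
   Context: A JB$^*$-algebra is a complex Jordan Banach algebra with algebra involution $^*$ such that $\|\{a,a,a\}\|=\|a\|^3$; it is a JB$^*$-triple with triple product $\{x,y,z\}=(x\circ y^* )\circ z+(z\circ y^* )\circ x-(x\circ z)\circ y^*$. Elements $a,b$ are orthogonal if $\{a,b,x\}=0$ for all $x$. A linear map $T$ is triple derivable at orthogonal pairs if $\{T(a),b,c\}+\{a,T(b),c\}+\{a,b,T(c)\}=0$ for all $a,b,c$ with $a\perp b$. A triple derivation satisfies $\delta\{a,b,c\}=\{\delta a,b,c\}+\{a,\delta b,c\}+\{a,b,\delta c\}$. A tripotent is $e$ with $\{e,e,e\}=e$; $A_2(e)=\{x:\{e,e,x\}=x\}$ with Peirce projection $P_2(e)$; $A_2(e)$ is a unital JB$^*$-algebra with product $x\circ_e y=\{x,e,y\}$ and involution $x^{*_e}=\{e,x,e\}$.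 The centre of a JB$^*$-algebra $B$ is the set of $z$ with $(z\circ c)\circ y=z\circ(c\circ y)$ for all $c,y\in B$. *)

theory Defs
  imports "HOL-Analysis.Analysis"
begin

text \<open>A complex Banach space is modelled as a real Banach space ('a :: banach)
  together with a complex scalar multiplication sc extending the real one.\<close>
definition complex_scalar :: "(complex \<Rightarrow> 'a::real_normed_vector \<Rightarrow> 'a) \<Rightarrow> bool" where
  "complex_scalar sc \<longleftrightarrow>
     (\<forall>r x. sc (complex_of_real r) x = r *\<^sub>R x) \<and>
     (\<forall>a b x. sc (a * b) x = sc a (sc b x)) \<and>
     (\<forall>a x y. sc a (x + y) = sc a x + sc a y) \<and>
     (\<forall>a b x. sc (a + b) x = sc a x + sc b x) \<and>
     (\<forall>a x. norm (sc a x) = cmod a * norm x)"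

definition tp :: "('a::ab_group_add \<Rightarrow> 'a \<Rightarrow> 'a) \<Rightarrow> ('a \<Rightarrow> 'a) \<Rightarrow> 'a \<Rightarrow> 'a \<Rightarrow> 'a \<Rightarrow> 'a" where
  "tp jp st x y z = jp (jp x (st y)) z + jp (jp z (st y)) x - jp (jp x z) (st y)"

definition JBstar_algebra ::
  "(complex \<Rightarrow> 'a::banach \<Rightarrow> 'a) \<Rightarrow> ('a \<Rightarrow> 'a \<Rightarrow> 'a) \<Rightarrow> ('a \<Rightarrow> 'a) \<Rightarrow> bool" where
  "JBstar_algebra sc jp st \<longleftrightarrow>
     complex_scalar sc \<and>
     \<comment> \<open>complex bilinear, commutative Jordan product, submultiplicative norm\<close>
     (\<forall>x y z. jp (x + y) z = jp x z + jp y z) \<and>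
     (\<forall>a x y. jp (sc a x) y = sc a (jp x y)) \<and>
     (\<forall>x y. jp x y = jp y x) \<and>
     (\<forall>x y. jp (jp x y) (jp x x) = jp x (jp y (jp x x))) \<and>
     (\<forall>x y. norm (jp x y) \<le> norm x * norm y) \<and>
     \<comment> \<open>algebra involution: conjugate linear, involutive, multiplicative\<close>
     (\<forall>x y. st (x + y) = st x + st y) \<and>
     (\<forall>a x. st (sc a x) = sc (cnj a) (st x)) \<and>
     (\<forall>x. st (st x) = x) \<and>
     (\<forall>x y. st (jp x y) = jp (st x) (st y)) \<and>
     \<comment> \<open>JB*-identity\<close>
     (\<forall>a. norm (tp jp st a a a) = norm a ^ 3)"

definition unital_JBstar_algebra ::
  "(complex \<Rightarrow> 'a::banach \<Rightarrow> 'a) \<Rightarrow> ('a \<Rightarrow> 'a \<Rightarrow> 'a) \<Rightarrow> ('a \<Rightarrow> 'a) \<Rightarrow> 'a \<Rightarrow> bool" where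
  "unital_JBstar_algebra sc jp st u \<longleftrightarrow> JBstar_algebra sc jp st \<and> (\<forall>x. jp u x = x)"

definition clinear_map :: "(complex \<Rightarrow> 'a::ab_group_add \<Rightarrow> 'a) \<Rightarrow> ('a \<Rightarrow> 'a) \<Rightarrow> bool" where
  "clinear_map sc f \<longleftrightarrow> (\<forall>x y. f (x + y) = f x + f y) \<and> (\<forall>a x. f (sc a x) = sc a (f x))"

definition orth :: "('a::ab_group_add \<Rightarrow> 'a \<Rightarrow> 'a) \<Rightarrow> ('a \<Rightarrow> 'a) \<Rightarrow> 'a \<Rightarrow> 'a \<Rightarrow> bool" where
  "orth jp st a b \<longleftrightarrow> (\<forall>x. tp jp st a b x = 0)"

definition triple_derivable_orth :: "('a::ab_group_add \<Rightarrow> 'a \<Rightarrow> 'a) \<Rightarrow> ('a \<Rightarrow> 'a) \<Rightarrow> ('a \<Rightarrow> 'a) \<Rightarrow> bool" where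
  "triple_derivable_orth jp st T \<longleftrightarrow>
     (\<forall>a b c. orth jp st a b \<longrightarrow>
        tp jp st (T a) b c + tp jp st a (T b) c + tp jp st a b (T c) = 0)"

definition triple_derivation_on ::
  "'a::ab_group_add set \<Rightarrow> (complex \<Rightarrow> 'a \<Rightarrow> 'a) \<Rightarrow> ('a \<Rightarrow> 'a \<Rightarrow> 'a) \<Rightarrow> ('a \<Rightarrow> 'a) \<Rightarrow> ('a \<Rightarrow> 'a) \<Rightarrow> bool" where
  "triple_derivation_on S sc jp st d \<longleftrightarrow>
     d ` S \<subseteq> S \<and>
     (\<forall>x\<in>S. \<forall>y\<in>S. d (x + y) = d x + d y) \<and>
     (\<forall>a. \<forall>x\<in>S. d (sc a x) = sc a (d x)) \<and>
     (\<forall>a\<in>S. \<forall>b\<in>S. \<forall>c\<in>S.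
        d (tp jp st a b c) = tp jp st (d a) b c + tp jp st a (d b) c + tp jp st a b (d c))"

definition tripotent :: "('a::ab_group_add \<Rightarrow> 'a \<Rightarrow> 'a) \<Rightarrow> ('a \<Rightarrow> 'a) \<Rightarrow> 'a \<Rightarrow> bool" where
  "tripotent jp st e \<longleftrightarrow> tp jp st e e e = e"

definition peirce2 :: "('a::ab_group_add \<Rightarrow> 'a \<Rightarrow> 'a) \<Rightarrow> ('a \<Rightarrow> 'a) \<Rightarrow> 'a \<Rightarrow> 'a set" where
  "peirce2 jp st e = {x. tp jp st e e x = x}"

definition P2 :: "('a::ab_group_add \<Rightarrow> 'a \<Rightarrow> 'a) \<Rightarrow> ('a \<Rightarrow> 'a) \<Rightarrow> 'a \<Rightarrow> 'a \<Rightarrow> 'a" where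
  "P2 jp st e x = tp jp st e (tp jp st e x e) e"

definition prod_e :: "('a::ab_group_add \<Rightarrow> 'a \<Rightarrow> 'a) \<Rightarrow> ('a \<Rightarrow> 'a) \<Rightarrow> 'a \<Rightarrow> 'a \<Rightarrow> 'a \<Rightarrow> 'a" where
  "prod_e jp st e x y = tp jp st x e y"

definition star_e :: "('a::ab_group_add \<Rightarrow> 'a \<Rightarrow> 'a) \<Rightarrow> ('a \<Rightarrow> 'a) \<Rightarrow> 'a \<Rightarrow> 'a \<Rightarrow> 'a" where
  "star_e jp st e x = tp jp st e x e"

definition centre_on :: "'a set \<Rightarrow> ('a \<Rightarrow> 'a \<Rightarrow> 'a) \<Rightarrow> 'a set" where
  "centre_on S jp = {z \<in> S. \<forall>c\<in>S. \<forall>y\<in>S. jp (jp z c) y = jp z (jp c y)}"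

end

theory Submission
  imports Defs
begin

lemma three: "(3::real) *\<^sub>R v = v + v + (v::'a::real_vector)"
proof -
  have "(3::real) = 1 + 1 + 1" by simp
  then show ?thesis by (simp only: scaleR_add_left scaleR_one)
qed
lemma lin: assumes "p + q = r + r" "r + q = p + p" shows "q = (r::'a::real_vector)"
proof -
  have p: "p = r + r - q" using assms(1) by (metis add_diff_cancel_right')
  have "q + q + q = r + r + r" using assms(2) unfolding p by (simp add: algebra_simps)
  then have "(3::real) *\<^sub>R q = 3 *\<^sub>R r" by (simp only: three)
  then show ?thesis by simp
qed
lemma neg: assumes "w = - w" shows "w = (0::'a::real_vector)"
proof -
  have "w + w = 0" using assms by (metis add.right_inverse)
  then have "2 *\<^sub>R w = 0" unfolding scaleR_2 .
  then show ?thesis by simp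
qed

lemma gen1: "(q::'a::ab_group_add) = q + x + q \<Longrightarrow> x = - q"
  by (metis add.commute add_diff_cancel add_diff_cancel_left' diff_minus_eq_add diff_zero minus_diff_eq)

locale jsa =
  fixes jp :: "'a::real_vector \<Rightarrow> 'a \<Rightarrow> 'a" and st :: "'a \<Rightarrow> 'a"
  assumes add1: "jp (x + y) z = jp x z + jp y z"
  and comm: "jp x y = jp y x"
  and jordan: "jp (jp x y) (jp x x) = jp x (jp y (jp x x))"
  and st_add: "st (x + y) = st x + st y"
  and st_jp: "st (jp x y) = jp (st x) (st y)"
  and st_st: "st (st x) = x"
begin

lemma add2: "jp x (y + z) = jp x y + jp x z"
  using add1[of y z x] comm by metis

lemma zero1: "jp 0 z = 0"
proof -
  have "jp 0 z = jp 0 z + jp 0 z" using add1[of 0 0 z] by simp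
  then show ?thesis by simp
qed

lemma zero2: "jp z 0 = 0" using zero1 comm by metis

lemma minus1: "jp (- x) z = - jp x z"
proof -
  have "jp (- x) z + jp x z = 0" using add1[of "-x" x z] zero1 by simp
  then show ?thesis by (simp add: eq_neg_iff_add_eq_0)
qed

lemma minus2: "jp z (- x) = - jp z x" using minus1 comm by metis

lemma diff1: "jp (x - y) z = jp x z - jp y z"
  using add1[of x "-y" z] minus1 by simp

lemma diff2: "jp z (x - y) = jp z x - jp z y"
  using diff1 comm by metis

lemmas dist = add1 add2 diff1 diff2 minus1 minus2 zero1 zero2

lemma F_lin0: "(jp (jp (jp a b) y) c + jp (jp (jp b c) y) a + jp (jp (jp c a) y) b) -
   (jp (jp a b) (jp y c) + jp (jp b c) (jp y a) + jp (jp c a) (jp y b)) = 0"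
proof -
  define j where "j x = jp (jp x y) (jp x x) - jp x (jp y (jp x x))" for x
  have j0: "j x = 0" for x unfolding j_def using jordan by simp
  have "j (a + b + c) - j (a + b) - j (b + c) - j (a + c) + j a + j b + j c =
     - ((jp (jp (jp a b) y) c + jp (jp (jp b c) y) a + jp (jp (jp c a) y) b) -
   (jp (jp a b) (jp y c) + jp (jp b c) (jp y a) + jp (jp c a) (jp y b)))
   - ((jp (jp (jp a b) y) c + jp (jp (jp b c) y) a + jp (jp (jp c a) y) b) -
   (jp (jp a b) (jp y c) + jp (jp b c) (jp y a) + jp (jp c a) (jp y b)))"
    unfolding j_def by (simp add: dist algebra_simps comm)
  then have "2 *\<^sub>R ((jp (jp (jp a b) y) c + jp (jp (jp b c) y) a + jp (jp (jp c a) y) b) -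
   (jp (jp a b) (jp y c) + jp (jp b c) (jp y a) + jp (jp c a) (jp y b))) = 0"
    unfolding scaleR_2 by (simp add: j0 algebra_simps)
  then show ?thesis by simp
qed

definition JJ where "JJ a b c = jp (jp a b) c + jp (jp c b) a - jp (jp a c) b"

lemma JTS1_aux: "JJ e f (JJ e X e) - (JJ (JJ e f e) X e + JJ (JJ e f e) X e) + JJ e (JJ f e X) e = ((jp (jp (jp e e) f) (jp X e) + jp (jp (jp e (jp X e)) f) e + jp (jp (jp (jp X e) e) f) e - (jp (jp e e) (jp f (jp X e)) + jp (jp e (jp X e)) (jp f e) + jp (jp (jp X e) e) (jp f e)))) - (jp X (jp (jp (jp e e) f) e + jp (jp (jp e e) f) e + jp (jp (jp e e) f) e - (jp (jp e e) (jp f e) + jp (jp e e) (jp f e) + jp (jp e e) (jp f e)))) + ((jp (jp (jp X f) e) (jp e e) + jp (jp (jp f (jp e e)) e) X + jp (jp (jp (jp e e) X) e) f - (jp (jp X f) (jp e (jp e e)) + jp (jp f (jp e e)) (jp e X) + jp (jp (jp e e) X) (jp e f)))) + ((jp (jp (jp f e) (jp X e)) e + jp (jp (jp e e) (jp X e)) f + jp (jp (jp e f) (jp X e)) e - (jp (jp f e) (jp (jp X e) e) + jp (jp e e) (jp (jp X e) f) + jp (jp e f) (jp (jp X e) e))) + (jp (jp (jp f e) (jp X e)) e + jp (jp (jp e e) (jp X e)) f + jp (jp (jp e f) (jp X e)) e - (jp (jp f e) (jp (jp X e) e) + jp (jp e e) (jp (jp X e) f) + jp (jp e f) (jp (jp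 X e) e)))) - ((jp (jp (jp X e) (jp e f)) e + jp (jp (jp e e) (jp e f)) X + jp (jp (jp e X) (jp e f)) e - (jp (jp X e) (jp (jp e f) e) + jp (jp e e) (jp (jp e f) X) + jp (jp e X) (jp (jp e f) e)))) + ((jp (jp (jp e e) (jp X f)) e + jp (jp (jp e e) (jp X f)) e + jp (jp (jp e e) (jp X f)) e - (jp (jp e e) (jp (jp X f) e) + jp (jp e e) (jp (jp X f) e) + jp (jp e e) (jp (jp X f) e)))) - ((jp (jp (jp X f) (jp e e)) e + jp (jp (jp f e) (jp e e)) X + jp (jp (jp e X) (jp e e)) f - (jp (jp X f) (jp (jp e e) e) + jp (jp f e) (jp (jp e e) X) + jp (jp e X) (jp (jp e e) f))) + (jp (jp (jp X f) (jp e e)) e + jp (jp (jp f e) (jp e e)) X + jp (jp (jp e X) (jp e e)) f - (jp (jp X f) (jp (jp e e) e) + jp (jp f e) (jp (jp e e) X) + jp (jp e X) (jp (jp e e) f)))) - ((jp (jp (jp e e) X) (jp e f) + jp (jp (jp e (jp e f)) X) e + jp (jp (jp (jp e f) e) X) e - (jp (jp e e) (jp X (jp e f)) + jp (jp e (jp e f)) (jp X e) + jp (jp (jp e f) e) (jp X e))) + (jp (jp (jp e e) X) (jp e f) + jp (jp (jp e (jp e f)) X) e + jp (jp (jp (jp e f) e) X) e - (jp (jp e e) (jp X (jp e f)) + jp (jp e (jp e f)) (jp X e) + jp (jp (jp e f) e) (jp X e)))) + (jp e (jp (jp (jp e e) f) X + jp (jp (jp e X) f) e + jp (jp (jp X e)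 f) e - (jp (jp e e) (jp f X) + jp (jp e X) (jp f e) + jp (jp X e) (jp f e))) + jp e (jp (jp (jp e e) f) X + jp (jp (jp e X) f) e + jp (jp (jp X e) f) e - (jp (jp e e) (jp f X) + jp (jp e X) (jp f e) + jp (jp X e) (jp f e)))) - ((jp (jp (jp f e) e) (jp X e) + jp (jp (jp e (jp X e)) e) f + jp (jp (jp (jp X e) f) e) e - (jp (jp f e) (jp e (jp X e)) + jp (jp e (jp X e)) (jp e f) + jp (jp (jp X e) f) (jp e e))) + (jp (jp (jp f e) e) (jp X e) + jp (jp (jp e (jp X e)) e) f + jp (jp (jp (jp X e) f) e) e - (jp (jp f e) (jp e (jp X e)) + jp (jp e (jp X e)) (jp e f) + jp (jp (jp X e) f) (jp e e)))) + ((jp (jp (jp X e) e) (jp e f) + jp (jp (jp e (jp e f)) e) X + jp (jp (jp (jp e f) X) e) e - (jp (jp X e) (jp e (jp e f)) + jp (jp e (jp e f)) (jp e X) + jp (jp (jp e f) X) (jp e e))) + (jp (jp (jp X e) e) (jp e f) + jp (jp (jp e (jp e f)) e) X + jp (jp (jp (jp e f) X) e) e - (jp (jp X e) (jp e (jp e f)) + jp (jp e (jp e f)) (jp e X) + jp (jp (jp e f) X) (jp e e))) + (jp (jp (jp X e) e) (jp e f) + jp (jp (jp e (jp e f)) e) X + jp (jp (jp (jp e f) X) e) e - (jp (jp X e) (jp e (jp e f)) + jp (jp e (jp e f)) (jp e X) + jp (jp (jp e f) X) (jp e e))) + (jp (jp (jp X e) e) (jp e f) + jp (jp (jp e (jp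 e f)) e) X + jp (jp (jp (jp e f) X) e) e - (jp (jp X e) (jp e (jp e f)) + jp (jp e (jp e f)) (jp e X) + jp (jp (jp e f) X) (jp e e)))) - (jp e (jp (jp (jp e e) X) f + jp (jp (jp e f) X) e + jp (jp (jp f e) X) e - (jp (jp e e) (jp X f) + jp (jp e f) (jp X e) + jp (jp f e) (jp X e)))) - ((jp (jp (jp (jp X f) e) e) e + jp (jp (jp e e) e) (jp X f) + jp (jp (jp e (jp X f)) e) e - (jp (jp (jp X f) e) (jp e e) + jp (jp e e) (jp e (jp X f)) + jp (jp e (jp X f)) (jp e e))))"
  unfolding JJ_def by (simp add: dist algebra_simps comm)

lemma JTS2_aux: "JJ e X (JJ e f e) - JJ (JJ e X e) f e + JJ e (JJ X e f) e - JJ e f (JJ e X e) = ((jp (jp (jp e e) X) (jp e f) + jp (jp (jp e (jp e f)) X) e + jp (jp (jp (jp e f) e) X) e - (jp (jp e e) (jp X (jp e f)) + jp (jp e (jp e f)) (jp X e) + jp (jp (jp e f) e) (jp X e)))) - (jp e (jp (jp (jp e e) f) X + jp (jp (jp e X) f) e + jp (jp (jp X e) f) e - (jp (jp e e) (jp f X) + jp (jp e X) (jp f e) + jp (jp X e) (jp f e)))) + ((jp (jp (jp f e) e) (jp X e) + jp (jp (jp e (jp X e)) e) f + jp (jp (jp (jp X e) f) e) e - (jp (jp f e) (jp e (jp X e)) + jp (jp e (jp X e)) (jp e f) + jp (jp (jp X e) f) (jp e e))) + (jp (jp (jp f e) e) (jp X e) + jp (jp (jp e (jp X e)) e) f + jp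 (jp (jp (jp X e) f) e) e - (jp (jp f e) (jp e (jp X e)) + jp (jp e (jp X e)) (jp e f) + jp (jp (jp X e) f) (jp e e))) + (jp (jp (jp f e) e) (jp X e) + jp (jp (jp e (jp X e)) e) f + jp (jp (jp (jp X e) f) e) e - (jp (jp f e) (jp e (jp X e)) + jp (jp e (jp X e)) (jp e f) + jp (jp (jp X e) f) (jp e e))) + (jp (jp (jp f e) e) (jp X e) + jp (jp (jp e (jp X e)) e) f + jp (jp (jp (jp X e) f) e) e - (jp (jp f e) (jp e (jp X e)) + jp (jp e (jp X e)) (jp e f) + jp (jp (jp X e) f) (jp e e)))) - ((jp (jp (jp X e) e) (jp e f) + jp (jp (jp e (jp e f)) e) X + jp (jp (jp (jp e f) X) e) e - (jp (jp X e) (jp e (jp e f)) + jp (jp e (jp e f)) (jp e X) + jp (jp (jp e f) X) (jp e e))) + (jp (jp (jp X e) e) (jp e f) + jp (jp (jp e (jp e f)) e) X + jp (jp (jp (jp e f) X) e) e - (jp (jp X e) (jp e (jp e f)) + jp (jp e (jp e f)) (jp e X) + jp (jp (jp e f) X) (jp e e)))) + (jp e (jp (jp (jp e e) X) f + jp (jp (jp e f) X) e + jp (jp (jp f e) X) e - (jp (jp e e) (jp X f) + jp (jp e f) (jp X e) + jp (jp f e) (jp X e))) + jp e (jp (jp (jp e e) X) f + jp (jp (jp e f) X) e + jp (jp (jp f e) X) e - (jp (jp e e) (jp X f) + jp (jp e f) (jp X e) + jp (jp f e) (jp X e)))) + (jp X (jp (jp (jp e e) f) e + jp (jp (jp e e)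 f) e + jp (jp (jp e e) f) e - (jp (jp e e) (jp f e) + jp (jp e e) (jp f e) + jp (jp e e) (jp f e)))) - ((jp (jp (jp f e) (jp X e)) e + jp (jp (jp e e) (jp X e)) f + jp (jp (jp e f) (jp X e)) e - (jp (jp f e) (jp (jp X e) e) + jp (jp e e) (jp (jp X e) f) + jp (jp e f) (jp (jp X e) e)))) + ((jp (jp (jp X e) (jp e f)) e + jp (jp (jp e e) (jp e f)) X + jp (jp (jp e X) (jp e f)) e - (jp (jp X e) (jp (jp e f) e) + jp (jp e e) (jp (jp e f) X) + jp (jp e X) (jp (jp e f) e))) + (jp (jp (jp X e) (jp e f)) e + jp (jp (jp e e) (jp e f)) X + jp (jp (jp e X) (jp e f)) e - (jp (jp X e) (jp (jp e f) e) + jp (jp e e) (jp (jp e f) X) + jp (jp e X) (jp (jp e f) e)))) + ((jp (jp (jp X f) (jp e e)) e + jp (jp (jp f e) (jp e e)) X + jp (jp (jp e X) (jp e e)) f - (jp (jp X f) (jp (jp e e) e) + jp (jp f e) (jp (jp e e) X) + jp (jp e X) (jp (jp e e) f)))) - ((jp (jp (jp e e) f) (jp X e) + jp (jp (jp e (jp X e)) f) e + jp (jp (jp (jp X e) e) f) e - (jp (jp e e) (jp f (jp X e)) + jp (jp e (jp X e)) (jp f e) + jp (jp (jp X e) e) (jp f e))) + (jp (jp (jp e e) f) (jp X e) + jp (jp (jp e (jp X e)) f) e + jp (jp (jp (jp X e) e) f) e - (jp (jp e e) (jp f (jp X e)) + jp (jp e (jp X e)) (jp f e) + jp (jp (jp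 X e) e) (jp f e)))) - ((jp (jp (jp X f) e) (jp e e) + jp (jp (jp f (jp e e)) e) X + jp (jp (jp (jp e e) X) e) f - (jp (jp X f) (jp e (jp e e)) + jp (jp f (jp e e)) (jp e X) + jp (jp (jp e e) X) (jp e f))) + (jp (jp (jp X f) e) (jp e e) + jp (jp (jp f (jp e e)) e) X + jp (jp (jp (jp e e) X) e) f - (jp (jp X f) (jp e (jp e e)) + jp (jp f (jp e e)) (jp e X) + jp (jp (jp e e) X) (jp e f)))) - ((jp (jp (jp (jp X f) e) e) e + jp (jp (jp e e) e) (jp X f) + jp (jp (jp e (jp X f)) e) e - (jp (jp (jp X f) e) (jp e e) + jp (jp e e) (jp e (jp X f)) + jp (jp e (jp X f)) (jp e e))))"
  unfolding JJ_def by (simp add: dist algebra_simps comm)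


lemma JTS1: "JJ e f (JJ e X e) + JJ e (JJ f e X) e = JJ (JJ e f e) X e + JJ (JJ e f e) X e"
proof -
  have "JJ e f (JJ e X e) - (JJ (JJ e f e) X e + JJ (JJ e f e) X e) + JJ e (JJ f e X) e = 0"
    using JTS1_aux[of e f X] unfolding F_lin0 zero2 by simp
  then show ?thesis by (simp add: algebra_simps)
qed

lemma JTS2: "JJ e X (JJ e f e) + JJ e (JJ X e f) e = JJ (JJ e X e) f e + JJ e f (JJ e X e)"
proof -
  have "JJ e X (JJ e f e) - JJ (JJ e X e) f e + JJ e (JJ X e f) e - JJ e f (JJ e X e) = 0"
    using JTS2_aux[of e X f] unfolding F_lin0 zero2 by simp
  then show ?thesis by (simp add: algebra_simps)
qed

lemma st_zero: "st 0 = 0"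
proof -
  have "st 0 = st 0 + st 0" using st_add[of 0 0] by simp
  then show ?thesis by simp
qed

lemma st_minus: "st (- x) = - st x"
proof -
  have "st (- x) + st x = 0" using st_add[of "-x" x] st_zero by simp
  then show ?thesis by (simp add: eq_neg_iff_add_eq_0)
qed

lemma st_diff: "st (x - y) = st x - st y"
  using st_add[of x "-y"] st_minus by simp

lemma tp_JJ: "tp jp st a b c = JJ a (st b) c" by (simp add: tp_def JJ_def)

lemma st_JJ: "st (JJ a b c) = JJ (st a) (st b) (st c)"
  by (simp add: JJ_def st_add st_diff st_jp)

lemma tp_sym: "tp jp st x y z = tp jp st z y x"
  unfolding tp_def using comm[of x z] by (simp add: algebra_simps)

lemma tp_add1: "tp jp st (x + x') y z = tp jp st x y z + tp jp st x' y z"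
  by (simp add: tp_def dist algebra_simps)
lemma tp_add2: "tp jp st x (y + y') z = tp jp st x y z + tp jp st x y' z"
  by (simp add: tp_def dist st_add algebra_simps)
lemma tp_add3: "tp jp st x y (z + z') = tp jp st x y z + tp jp st x y z'"
  by (simp add: tp_def dist algebra_simps)
lemma tp_minus2: "tp jp st x (- y) z = - tp jp st x y z"
  by (simp add: tp_def dist st_minus algebra_simps)
lemma tp_diff2: "tp jp st x (y - y') z = tp jp st x y z - tp jp st x y' z"
  by (simp add: tp_def dist st_diff algebra_simps)

lemma JTS1_tp: "tp jp st e e (tp jp st e x e) + tp jp st e (tp jp st e e x) e
   = tp jp st (tp jp st e e e) x e + tp jp st (tp jp st e e e) x e"
  using JTS1[of e "st e" "st x"] by (simp add: tp_JJ st_JJ st_st)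

lemma JTS2_tp: "tp jp st e x (tp jp st e e e) + tp jp st e (tp jp st x e e) e
   = tp jp st (tp jp st e x e) e e + tp jp st e e (tp jp st e x e)"
  using JTS2[of e "st x" "st e"] by (simp add: tp_JJ st_JJ st_st)

lemma QL_LQ:
  assumes e3: "tp jp st e e e = e"
  shows "tp jp st e (tp jp st e e x) e = tp jp st e x e"
    and "tp jp st e e (tp jp st e x e) = tp jp st e x e"
proof -
  define p where "p = tp jp st e e (tp jp st e x e)"
  define q where "q = tp jp st e (tp jp st e e x) e"
  define r where "r = tp jp st e x e"
  have 1: "p + q = r + r" using JTS1_tp[of e x] unfolding e3 p_def q_def r_def .
  have "r + q = p + p" using JTS2_tp[of e x] unfolding e3 p_def q_def r_def
    using tp_sym[of "tp jp st e x e" e e] tp_sym[of x e e] by simp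
  then have qr: "q = r" using lin 1 by blast
  then show "tp jp st e (tp jp st e e x) e = tp jp st e x e" unfolding q_def r_def .
  show "tp jp st e e (tp jp st e x e) = tp jp st e x e" using 1 unfolding qr p_def r_def
    by (metis add_right_cancel)
qed

lemma central:
  assumes cen: "\<And>c y. jp (jp z c) y = jp z (jp c y)" and sz: "st z = z"
  shows "tp jp st (jp z a) b c = jp z (tp jp st a b c)"
    and "tp jp st a (jp z b) c = jp z (tp jp st a b c)"
    and "tp jp st a b (jp z c) = jp z (tp jp st a b c)"
proof -
  have cen2: "jp y (jp z c) = jp z (jp c y)" for c y using cen comm by metis
  have cen3: "jp (jp c z) y = jp z (jp c y)" for c y using cen comm by metis
  have cen4: "jp y (jp c z) = jp z (jp c y)" for c y using cen comm by metis
  show "tp jp st (jp z a) b c = jp z (tp jp st a b c)"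
    by (simp add: tp_def cen cen2 cen3 cen4 dist comm)
  show "tp jp st a (jp z b) c = jp z (tp jp st a b c)"
    by (simp add: tp_def cen cen2 cen3 cen4 dist comm st_jp sz)
  show "tp jp st a b (jp z c) = jp z (tp jp st a b c)"
    by (simp add: tp_def cen cen2 cen3 cen4 dist comm)
qed

end

theorem mainTheorem12:
  fixes sc :: "complex \<Rightarrow> 'a::banach \<Rightarrow> 'a"
    and jp :: "'a \<Rightarrow> 'a \<Rightarrow> 'a" and st :: "'a \<Rightarrow> 'a" and u :: 'a
    and T \<delta> \<delta>e :: "'a \<Rightarrow> 'a" and e \<xi> \<xi>e :: 'a
  assumes A: "unital_JBstar_algebra sc jp st u"
    and T_bdd: "bounded_linear T" and T_lin: "clinear_map sc T"
    and T_der: "triple_derivable_orth jp st T"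
    and e_trip: "tripotent jp st e"
    and \<delta>_der: "triple_derivation_on UNIV sc jp st \<delta>"
    and \<xi>_c: "\<xi> \<in> centre_on UNIV jp" and \<xi>_sa: "st \<xi> = \<xi>"
    and T_eq: "\<forall>a. T a = \<delta> a + jp \<xi> a"
    and \<delta>e_der: "triple_derivation_on (peirce2 jp st e) sc (prod_e jp st e) (star_e jp st e) \<delta>e"
    and \<xi>e_c: "\<xi>e \<in> centre_on (peirce2 jp st e) (prod_e jp st e)"
    and \<xi>e_sa: "star_e jp st e \<xi>e = \<xi>e"
    and Te_eq: "\<forall>a\<in>peirce2 jp st e. P2 jp st e (T a) = \<delta>e a + prod_e jp st e \<xi>e a"
  shows "jp \<xi> e = \<xi>e"
proof -
  from A have JB: "JBstar_algebra sc jp st" by (simp add: unital_JBstar_algebra_def)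
  interpret J: jsa jp st
    using JB unfolding JBstar_algebra_def by unfold_locales auto
  have e3: "tp jp st e e e = e" using e_trip by (simp add: tripotent_def)
  note QL = J.QL_LQ(1)[OF e3] and LQ = J.QL_LQ(2)[OF e3]
  define d where "d = \<delta> e"
  have dder: "\<delta> (tp jp st e e e) = tp jp st (\<delta> e) e e + tp jp st e (\<delta> e) e + tp jp st e e (\<delta> e)"
    using \<delta>_der by (simp add: triple_derivation_on_def)
  hence d_eq: "d = tp jp st e e d + tp jp st e d e + tp jp st e e d"
    unfolding e3 d_def using J.tp_sym[of "\<delta> e" e e] by simp
  from d_eq have "tp jp st e d e = tp jp st e (tp jp st e e d + tp jp st e d e + tp jp st e e d) e"
    by (rule arg_cong)
  then have "tp jp st e d e = tp jp st e d e + tp jp st e (tp jp st e d e) e + tp jp st e d e"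
    by (simp only: J.tp_add2 QL)
  then have Qd: "tp jp st e (tp jp st e d e) e = - tp jp st e d e" by (rule gen1)
  have cen: "\<And>c y. jp (jp \<xi> c) y = jp \<xi> (jp c y)" using \<xi>_c by (simp add: centre_on_def)
  note Cz = J.central[OF cen \<xi>_sa]
  have Qz: "tp jp st e (jp \<xi> e) e = jp \<xi> e" using Cz(2)[of e e e] e3 by simp
  have P2z: "P2 jp st e (jp \<xi> e) = jp \<xi> e" by (simp add: P2_def Qz)
  have xe2: "tp jp st e e \<xi>e = \<xi>e" using \<xi>e_c by (simp add: centre_on_def peirce2_def)
  have xesa: "tp jp st e \<xi>e e = \<xi>e" using \<xi>e_sa by (simp add: star_e_def)
  have epe: "e \<in> peirce2 jp st e" using e3 by (simp add: peirce2_def)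
  have Te: "P2 jp st e (T e) = \<delta>e e + prod_e jp st e \<xi>e e" using Te_eq epe by blast
  have "P2 jp st e (T e) = P2 jp st e d + jp \<xi> e"
    using T_eq P2z unfolding d_def P2_def by (simp add: J.tp_add2)
  moreover have "prod_e jp st e \<xi>e e = \<xi>e" using xe2 J.tp_sym[of \<xi>e e e] by (simp add: prod_e_def)
  ultimately have main: "P2 jp st e d + jp \<xi> e = \<delta>e e + \<xi>e" using Te by simp
  define a where "a = \<delta>e e"
  have a2: "tp jp st e e a = a" using \<delta>e_der epe unfolding a_def triple_derivation_on_def peirce2_def
    by blast
  have Qa2: "tp jp st e e (tp jp st e a e) = tp jp st e a e" by (rule LQ)
  have der: "\<delta>e (tp (prod_e jp st e) (star_e jp st e) e e e) =
      tp (prod_e jp st e) (star_e jp st e) a e e + tp (prod_e jp st e) (star_e jp st e) e a e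
      + tp (prod_e jp st e) (star_e jp st e) e e a"
    using \<delta>e_der epe unfolding a_def triple_derivation_on_def by blast
  have tpE: "tp (prod_e jp st e) (star_e jp st e) x y z =
     prod_e jp st e (prod_e jp st e x (star_e jp st e y)) z + prod_e jp st e (prod_e jp st e z (star_e jp st e y)) x
     - prod_e jp st e (prod_e jp st e x z) (star_e jp st e y)" for x y z
    by (simp only: tp_def)
  have se: "star_e jp st e e = e" using e3 by (simp add: star_e_def)
  have pl: "prod_e jp st e e v = v" if "tp jp st e e v = v" for v
    using that by (simp add: prod_e_def)
  have pr: "prod_e jp st e v e = v" if "tp jp st e e v = v" for v
    using that J.tp_sym[of v e e] by (simp add: prod_e_def)
  have E1: "tp (prod_e jp st e) (star_e jp st e) e e e = e"
    unfolding tpE se using pl[OF e3] by simp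
  have E2: "tp (prod_e jp st e) (star_e jp st e) a e e = a"
    unfolding tpE se using pl[OF e3] pl[OF a2] pr[OF a2] by simp
  have E3: "tp (prod_e jp st e) (star_e jp st e) e e a = a"
    unfolding tpE se using pl[OF e3] pl[OF a2] pr[OF a2] by simp
  have E4: "tp (prod_e jp st e) (star_e jp st e) e a e = tp jp st e a e"
    unfolding tpE se using pl[OF e3] pl[OF Qa2] pr[OF Qa2] by (simp add: star_e_def)
  have "\<delta>e e = a + tp jp st e a e + a" using der unfolding E1 E2 E3 E4 .
  then have "a = a + tp jp st e a e + a" by (simp only: a_def[symmetric])
  then have Qa: "tp jp st e a e = - a" by (rule gen1)
  define w where "w = \<xi>e - jp \<xi> e"
  have w1: "w = P2 jp st e d - a" using main unfolding w_def a_def by (simp add: algebra_simps)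
  have "tp jp st e w e = w" unfolding w_def by (simp add: J.tp_diff2 xesa Qz)
  moreover have "tp jp st e w e = - w"
    unfolding w1 P2_def by (simp add: J.tp_diff2 Qa Qd J.tp_minus2)
  ultimately have "w = - w" by simp
  then have "w = 0" by (rule neg)
  then show ?thesis unfolding w_def by simp
qed

end
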